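(* For every integer $k\in\{4-n,\dots,n-1\}$ and every $t\ge 3$ (for cycles) or $t\ge 1$ (for paths): (a) $\left\lceil\frac{t(n+k-3)}{2}\right\rceil\le\gamma_k^o(K_n\times C_t)\le t\left\lceil\frac{n+k+1}{2}\right\rceil$; (b) $\left\lceil\frac{t(n+k-3)+2}{2}\right\rceil\le\gamma_k^o(K_n\times P_t)\le t\left\lceil\frac{n+k+1}{2}\right\rceil$.
   Context: Graphs are finite and simple; $K_n$ is the complete graph on $n$ vertices, $C_t$ the cycle and $P_t$ the path on $t$ vertices. In a graph $G=(V,E)$, for $S\subseteq V$ and $v\in V$, $\delta_S(v)$ is the number of neighbours of $v$ in $S$, $\overline{S}=V\setminus S$, and $\partial(S)$ the set of vertices of $\overline{S}$ with a neighbour in $S$. A nonempty $S$ is an offensive $k$-alliance if $\delta_S(v)\ge\delta_{\overline{S}}(v)+k$ for every $v\in\partial(S)$, and a global offensive $k$-alliance if moreover it is dominating; $\gamma_k^o(G)$ is the minimum cardinality of a global offensive $k$-alliance. The Cartesian product $G_1\times G_2$ has vertex set $V_1\times V_2$, with $(u,v)\sim(u',v')$ iff either $u=u'$ and $v\sim v'$, or $v=v'$ and $u\sim u'$. *)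

theory Defs
  imports Complex_Main
begin

text \<open>A finite simple graph is given by a vertex set V and a symmetric irreflexive
adjacency relation E (restricted to V).\<close>

definition complete_V :: "nat \<Rightarrow> nat set" where "complete_V n = {0..<n}"
definition complete_E :: "nat \<Rightarrow> nat \<Rightarrow> bool" where "complete_E i j = (i \<noteq> j)"

definition cycle_V :: "nat \<Rightarrow> nat set" where "cycle_V t = {0..<t}"
definition cycle_E :: "nat \<Rightarrow> nat \<Rightarrow> nat \<Rightarrow> bool" where
  "cycle_E t i j = (i \<noteq> j \<and> ((i + 1) mod t = j \<or> (j + 1) mod t = i))"

definition path_V :: "nat \<Rightarrow> nat set" where "path_V t = {0..<t}"
definition path_E :: "nat \<Rightarrow> nat \<Rightarrow> bool" where
  "path_E i j = (i + 1 = j \<or> j + 1 = i)"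

definition cprod_V :: "'a set \<Rightarrow> 'b set \<Rightarrow> ('a \<times> 'b) set" where
  "cprod_V V1 V2 = V1 \<times> V2"
definition cprod_E :: "('a \<Rightarrow> 'a \<Rightarrow> bool) \<Rightarrow> ('b \<Rightarrow> 'b \<Rightarrow> bool) \<Rightarrow> 'a \<times> 'b \<Rightarrow> 'a \<times> 'b \<Rightarrow> bool" where
  "cprod_E E1 E2 x y = ((fst x = fst y \<and> E2 (snd x) (snd y)) \<or> (snd x = snd y \<and> E1 (fst x) (fst y)))"

definition deg_in :: "('a \<Rightarrow> 'a \<Rightarrow> bool) \<Rightarrow> 'a set \<Rightarrow> 'a \<Rightarrow> nat" where
  "deg_in E S v = card {u \<in> S. E v u}"

definition boundary :: "'a set \<Rightarrow> ('a \<Rightarrow> 'a \<Rightarrow> bool) \<Rightarrow> 'a set \<Rightarrow> 'a set" where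
  "boundary V E S = {v \<in> V - S. \<exists>u \<in> S. E v u}"

definition offensive_alliance :: "'a set \<Rightarrow> ('a \<Rightarrow> 'a \<Rightarrow> bool) \<Rightarrow> int \<Rightarrow> 'a set \<Rightarrow> bool" where
  "offensive_alliance V E k S \<longleftrightarrow> S \<noteq> {} \<and> S \<subseteq> V \<and>
     (\<forall>v \<in> boundary V E S. int (deg_in E S v) \<ge> int (deg_in E (V - S) v) + k)"

definition dominating :: "'a set \<Rightarrow> ('a \<Rightarrow> 'a \<Rightarrow> bool) \<Rightarrow> 'a set \<Rightarrow> bool" where
  "dominating V E S \<longleftrightarrow> S \<subseteq> V \<and> (\<forall>v \<in> V - S. \<exists>u \<in> S. E v u)"

definition global_offensive_alliance :: "'a set \<Rightarrow> ('a \<Rightarrow> 'a \<Rightarrow> bool) \<Rightarrow> int \<Rightarrow> 'a set \<Rightarrow> bool" where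
  "global_offensive_alliance V E k S \<longleftrightarrow> offensive_alliance V E k S \<and> dominating V E S"

text \<open>gamma_k^o(G): minimum cardinality of a global offensive k-alliance
(V itself is always one when V is nonempty, so the minimum exists).\<close>
definition gamma_off :: "'a set \<Rightarrow> ('a \<Rightarrow> 'a \<Rightarrow> bool) \<Rightarrow> int \<Rightarrow> nat" where
  "gamma_off V E k = Min (card ` {S. global_offensive_alliance V E k S})"

end

theory Submission
  imports Defs
begin

lemma gamma_props:
  assumes fin: "finite V" and S0: "global_offensive_alliance V E k S0"
  shows "(\<exists>S. global_offensive_alliance V E k S \<and> card S = gamma_off V E k)
       \<and> (\<forall>S. global_offensive_alliance V E k S \<longrightarrow> gamma_off V E k \<le> card S)"
proof -
  let ?A = "{S. global_offensive_alliance V E k S}"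
  have sub: "?A \<subseteq> Pow V"
    by (auto simp: global_offensive_alliance_def offensive_alliance_def)
  have finA: "finite ?A" using sub fin by (meson finite_Pow_iff finite_subset)
  have ne: "card ` ?A \<noteq> {}" using S0 by auto
  have "gamma_off V E k \<in> card ` ?A"
    unfolding gamma_off_def using finA ne by (intro Min_in) auto
  moreover have "\<forall>S\<in>?A. gamma_off V E k \<le> card S"
    unfolding gamma_off_def using finA by (auto intro: Min_le)
  ultimately show ?thesis by force
qed

lemma nbhd_card:
  fixes i j n t :: nat
  assumes irr: "\<forall>j. \<not> F j j" and i: "i < n" and j: "j < t"
  shows "card {u \<in> {0..<n} \<times> {0..<t}. cprod_E complete_E F (i,j) u}
         = (n - 1) + card {j'. j' < t \<and> F j j'}"
proof -
  have eq: "{u \<in> {0..<n} \<times> {0..<t}. cprod_E complete_E F (i,j) u}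
     = (({0..<n} - {i}) \<times> {j}) \<union> ({i} \<times> {j'. j' < t \<and> F j j'})"
    using i j irr by (auto simp: cprod_E_def complete_E_def)
  have "card ((({0..<n} - {i}) \<times> {j}) \<union> ({i} \<times> {j'. j' < t \<and> F j j'}))
     = card (({0..<n} - {i}) \<times> {j}) + card ({i} \<times> {j'. j' < t \<and> F j j'})"
    by (rule card_Un_disjoint) auto
  also have "\<dots> = (n - 1) + card {j'. j' < t \<and> F j j'}"
    using i by (simp add: card_cartesian_product)
  finally show ?thesis using eq by simp
qed



lemma column_bound:
  fixes n t j :: nat and k :: int
  assumes irr: "\<forall>j. \<not> F j j" and j: "j < t" and kn: "k \<le> int n - 1"
    and A: "global_offensive_alliance ({0..<n} \<times> {0..<t}) (cprod_E complete_E F) k S"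
  shows "2 * int (card {u \<in> S. snd u = j}) \<ge> int n - 1 + k - int (card {j'. j' < t \<and> F j j'})"
proof -
  let ?V = "{0..<n} \<times> {0..<t}"
  let ?E = "cprod_E complete_E F"
  let ?c = "card {j'. j' < t \<and> F j j'}"
  have SV: "S \<subseteq> ?V" and dom: "\<forall>v \<in> ?V - S. \<exists>u \<in> S. ?E v u"
    and off: "\<forall>v \<in> boundary ?V ?E S. int (deg_in ?E S v) \<ge> int (deg_in ?E (?V - S) v) + k"
    using A by (auto simp: global_offensive_alliance_def offensive_alliance_def dominating_def)
  have finS: "finite S" using SV by (rule finite_subset) simp
  show ?thesis
  proof (cases "\<forall>i<n. (i,j) \<in> S")
    case True
    have "{0..<n} \<times> {j} \<subseteq> {u \<in> S. snd u = j}" using True by auto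
    hence "card ({0..<n} \<times> {j}) \<le> card {u \<in> S. snd u = j}"
      by (intro card_mono) (use finS in auto)
    hence "n \<le> card {u \<in> S. snd u = j}" by (simp add: card_cartesian_product)
    thus ?thesis using kn by linarith
  next
    case False
    then obtain i where i: "i < n" and iS: "(i,j) \<notin> S" by auto
    let ?v = "(i,j)"
    have vV: "?v \<in> ?V - S" using i j iS by auto
    then obtain u where "u \<in> S" "?E ?v u" using dom by blast
    hence "?v \<in> boundary ?V ?E S" using vV by (auto simp: boundary_def)
    hence ineq: "int (deg_in ?E S ?v) \<ge> int (deg_in ?E (?V - S) ?v) + k" using off by blast
    have un: "{u \<in> S. ?E ?v u} \<union> {u \<in> ?V - S. ?E ?v u} = {u \<in> ?V. ?E ?v u}"
      using SV by auto
    have "card ({u \<in> S. ?E ?v u} \<union> {u \<in> ?V - S. ?E ?v u})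
         = card {u \<in> S. ?E ?v u} + card {u \<in> ?V - S. ?E ?v u}"
      by (rule card_Un_disjoint) (use finS in auto)
    hence sum: "deg_in ?E S ?v + deg_in ?E (?V - S) ?v = (n - 1) + ?c"
      using un nbhd_card[of F i n j t, OF irr i j] by (simp add: deg_in_def)
    have sub: "{u \<in> S. ?E ?v u} \<subseteq> {u \<in> S. snd u = j} \<union> ({i} \<times> {j'. j' < t \<and> F j j'})"
      using SV by (auto simp: cprod_E_def complete_E_def)
    have "deg_in ?E S ?v \<le> card ({u \<in> S. snd u = j} \<union> ({i} \<times> {j'. j' < t \<and> F j j'}))"
      unfolding deg_in_def by (intro card_mono sub) (use finS in auto)
    also have "\<dots> \<le> card {u \<in> S. snd u = j} + card ({i} \<times> {j'. j' < t \<and> F j j'})"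
      by (rule card_Un_le)
    also have "\<dots> = card {u \<in> S. snd u = j} + ?c" by (simp add: card_cartesian_product)
    finally have le: "deg_in ?E S ?v \<le> card {u \<in> S. snd u = j} + ?c" .
    show ?thesis using ineq sum le i by linarith
  qed
qed


lemma card_columns:
  fixes t n :: nat
  assumes SV: "S \<subseteq> {0..<n} \<times> {0..<t}"
  shows "card S = (\<Sum>j<t. card {u \<in> S. snd u = j})"
proof -
  have finS: "finite S" using SV by (rule finite_subset) simp
  have e: "S = (\<Union>j\<in>{..<t}. {u \<in> S. snd u = j})" proof
    show "S \<subseteq> (\<Union>j\<in>{..<t}. {u \<in> S. snd u = j})"
    proof
      fix u assume u: "u \<in> S"
      hence "snd u < t" using SV by (auto simp: mem_Times_iff)
      thus "u \<in> (\<Union>j\<in>{..<t}. {u \<in> S. snd u = j})" using u by blast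
    qed
  qed blast
  have "card (\<Union>j\<in>{..<t}. {u \<in> S. snd u = j}) = (\<Sum>j<t. card {u \<in> S. snd u = j})"
    by (rule card_UN_disjoint) (simp_all add: finS, blast)
  thus ?thesis using e by simp
qed

lemma lower_gen:
  fixes n t :: nat and k :: int and b :: "nat \<Rightarrow> int"
  assumes irr: "\<forall>j. \<not> F j j" and kn: "k \<le> int n - 1"
    and bnd: "\<forall>j<t. int (card {j'. j' < t \<and> F j j'}) \<le> b j"
    and A: "global_offensive_alliance ({0..<n} \<times> {0..<t}) (cprod_E complete_E F) k S"
  shows "2 * int (card S) \<ge> (\<Sum>j<t. int n - 1 + k - b j)"
proof -
  have SV: "S \<subseteq> {0..<n} \<times> {0..<t}"
    using A by (auto simp: global_offensive_alliance_def offensive_alliance_def)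
  have "(\<Sum>j<t. int n - 1 + k - b j) \<le> (\<Sum>j<t. 2 * int (card {u \<in> S. snd u = j}))"
  proof (rule sum_mono)
    fix j assume "j \<in> {..<t}"
    hence j: "j < t" by simp
    show "int n - 1 + k - b j \<le> 2 * int (card {u \<in> S. snd u = j})"
      using column_bound[OF irr j kn A] bnd j by force
  qed
  also have "\<dots> = 2 * int (card S)"
    using card_columns[OF SV] by (simp add: sum_distrib_left)
  finally show ?thesis .
qed

lemma upper_gen:
  fixes n t m :: nat and k :: int
  assumes irr: "\<forall>j. \<not> F j j"
    and bnd: "\<forall>j<t. card {j'. j' < t \<and> F j j'} \<le> 2"
    and mn: "m \<le> n" and m0: "0 < m" and t0: "0 < t" and mk: "2 * int m \<ge> int n + k + 1"
  shows "global_offensive_alliance ({0..<n} \<times> {0..<t}) (cprod_E complete_E F) k ({0..<m} \<times> {0..<t})"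
proof -
  let ?V = "{0..<n} \<times> {0..<t}"
  let ?E = "cprod_E complete_E F"
  let ?S = "{0..<m} \<times> {0..<t}"
  have key: "int (deg_in ?E ?S v) \<ge> int (deg_in ?E (?V - ?S) v) + k
        \<and> (\<exists>u \<in> ?S. ?E v u)" if v: "v \<in> ?V - ?S" for v
  proof -
    obtain i j where vij: "v = (i,j)" by fastforce
    have i: "i < n" "m \<le> i" and j: "j < t" using v vij by auto
    have e1: "{u \<in> ?S. ?E (i,j) u} = {0..<m} \<times> {j}"
      using i j by (auto simp: cprod_E_def complete_E_def)
    have d1: "deg_in ?E ?S v = m" using e1 vij by (simp add: deg_in_def card_cartesian_product)
    have un: "{u \<in> ?S. ?E v u} \<union> {u \<in> ?V - ?S. ?E v u} = {u \<in> ?V. ?E v u}"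
      using mn by auto
    have "card ({u \<in> ?S. ?E v u} \<union> {u \<in> ?V - ?S. ?E v u})
         = card {u \<in> ?S. ?E v u} + card {u \<in> ?V - ?S. ?E v u}"
      by (rule card_Un_disjoint) auto
    hence "deg_in ?E ?S v + deg_in ?E (?V - ?S) v = (n - 1) + card {j'. j' < t \<and> F j j'}"
      using un nbhd_card[of F i n j t, OF irr i(1) j] vij by (simp add: deg_in_def)
    moreover have "card {j'. j' < t \<and> F j j'} \<le> 2" using bnd j by blast
    ultimately have "int (deg_in ?E (?V - ?S) v) \<le> int n - 1 + 2 - int m"
      using d1 i by linarith
    moreover have "(0, j) \<in> ?S" "?E v (0,j)" using m0 j i vij
      by (auto simp: cprod_E_def complete_E_def)
    ultimately have "int (deg_in ?E ?S v) \<ge> int (deg_in ?E (?V - ?S) v) + k"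
      using d1 mk by linarith
    moreover have "\<exists>u \<in> ?S. ?E v u" using \<open>(0, j) \<in> ?S\<close> \<open>?E v (0,j)\<close> by blast
    ultimately show ?thesis by blast
  qed
  have ne: "?S \<noteq> {}" using m0 t0 by auto
  have SV: "?S \<subseteq> ?V" using mn by auto
  have b: "\<forall>v \<in> boundary ?V ?E ?S. int (deg_in ?E ?S v) \<ge> int (deg_in ?E (?V - ?S) v) + k"
    using key unfolding boundary_def by blast
  have d: "\<forall>v \<in> ?V - ?S. \<exists>u \<in> ?S. ?E v u" using key by blast
  show ?thesis
    unfolding global_offensive_alliance_def offensive_alliance_def dominating_def
    using b d ne SV by blast
qed


lemma cycle_nb:
  fixes t j :: nat
  assumes j: "j < t"
  shows "card {j'. j' < t \<and> cycle_E t j j'} \<le> 2"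
proof -
  have "{j'. j' < t \<and> cycle_E t j j'} \<subseteq> {(j+1) mod t, if j = 0 then t - 1 else j - 1}"
  proof
    fix x assume x: "x \<in> {j'. j' < t \<and> cycle_E t j j'}"
    hence xt: "x < t" and c: "(j + 1) mod t = x \<or> (x + 1) mod t = j" by (auto simp: cycle_E_def)
    show "x \<in> {(j+1) mod t, if j = 0 then t - 1 else j - 1}"
    proof (cases "(j + 1) mod t = x")
      case True thus ?thesis by simp
    next
      case False
      hence e: "(x + 1) mod t = j" using c by blast
      show ?thesis
      proof (cases "x + 1 < t")
        case True
        hence "j = x + 1" using e by simp
        thus ?thesis by simp
      next
        case False
        hence "x + 1 = t" using xt by simp
        hence "j = 0" "x = t - 1" using e by auto
        thus ?thesis by simp
      qed
    qed
  qed
  hence "card {j'. j' < t \<and> cycle_E t j j'} \<le> card {(j+1) mod t, if j = 0 then t - 1 else j - 1}"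
    by (intro card_mono) auto
  also have "\<dots> \<le> 2" by (simp add: card_insert_if)
  finally show ?thesis .
qed

lemma path_nb:
  fixes t j :: nat
  shows "card {j'. j' < t \<and> path_E j j'} \<le> (if 0 < j then 1 else 0) + (if j + 1 < t then 1 else 0)"
proof -
  have "{j'. j' < t \<and> path_E j j'} \<subseteq> (if 0 < j then {j - 1} else {}) \<union> (if j + 1 < t then {j + 1} else {})"
    by (auto simp: path_E_def)
  hence "card {j'. j' < t \<and> path_E j j'} \<le> card ((if 0 < j then {j - 1} else {}) \<union> (if j + 1 < t then {j + 1} else {}))"
    by (intro card_mono) auto
  also have "\<dots> \<le> card (if 0 < j then {j - 1} else {}) + card (if j + 1 < t then {j + 1} else ({}::nat set))"
    by (rule card_Un_le)
  also have "\<dots> = (if 0 < j then 1 else 0) + (if j + 1 < t then 1 else 0)" by simp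
  finally show ?thesis .
qed

lemma path_sum:
  fixes s :: nat
  shows "(\<Sum>j<Suc s. ((if 0 < j then 1 else 0) + (if j + 1 < Suc s then 1 else 0) :: int)) = 2 * int s"
proof -
  have a: "(\<Sum>j<Suc s. (if 0 < j then 1 else 0) :: int) = int s"
    by (simp only: sum.lessThan_Suc_shift) simp
  have b: "(\<Sum>j<Suc s. (if j + 1 < Suc s then 1 else 0) :: int) = int s"
    by (simp only: sum.lessThan_Suc) simp
  show ?thesis using a b by (simp add: sum.distrib)
qed

theorem mainTheorem16:
  fixes n :: nat and k :: int
  assumes "4 - int n \<le> k" and "k \<le> int n - 1"
  shows "(\<forall>t::nat. t \<ge> 3 \<longrightarrow>
            \<lceil>real t * real_of_int (int n + k - 3) / 2\<rceil>
              \<le> int (gamma_off (cprod_V (complete_V n) (cycle_V t)) (cprod_E complete_E (cycle_E t)) k)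
          \<and> int (gamma_off (cprod_V (complete_V n) (cycle_V t)) (cprod_E complete_E (cycle_E t)) k)
              \<le> int t * \<lceil>real_of_int (int n + k + 1) / 2\<rceil>)
       \<and> (\<forall>t::nat. t \<ge> 1 \<longrightarrow>
            \<lceil>(real t * real_of_int (int n + k - 3) + 2) / 2\<rceil>
              \<le> int (gamma_off (cprod_V (complete_V n) (path_V t)) (cprod_E complete_E path_E) k)
          \<and> int (gamma_off (cprod_V (complete_V n) (path_V t)) (cprod_E complete_E path_E) k)
              \<le> int t * \<lceil>real_of_int (int n + k + 1) / 2\<rceil>)"
proof -
  note k1 = assms(1) and kn = assms(2)
  define M where "M = \<lceil>real_of_int (int n + k + 1) / 2\<rceil>"
  define m where "m = nat M"
  have M1: "real_of_int (int n + k + 1) / 2 \<le> real_of_int M" unfolding M_def by simp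
  hence "real_of_int (int n + k + 1) \<le> real_of_int (2 * M)" by simp
  hence M2: "int n + k + 1 \<le> 2 * M" by (simp only: of_int_le_iff)
  have "M \<le> int n" unfolding M_def using kn by (simp add: ceiling_le_iff)
  hence mn: "m \<le> n" unfolding m_def by simp
  have Mpos: "M \<ge> 1" using M2 k1 by linarith
  hence mM: "int m = M" and m0: "0 < m" unfolding m_def by auto
  have mk: "2 * int m \<ge> int n + k + 1" using M2 mM by simp
  have irrC: "\<forall>j. \<not> cycle_E t j j" for t by (simp add: cycle_E_def)
  have irrP: "\<forall>j. \<not> path_E j j" by (simp add: path_E_def)
  have VV: "cprod_V (complete_V n) (cycle_V t) = {0..<n} \<times> {0..<t}"
       "cprod_V (complete_V n) (path_V t) = {0..<n} \<times> {0..<t}" for t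
    by (simp_all add: cprod_V_def complete_V_def cycle_V_def path_V_def)
  have pnb2: "\<forall>j<t. card {j'. j' < t \<and> path_E j j'} \<le> 2" for t
  proof (intro allI impI)
    fix j :: nat
    have "card {j'. j' < t \<and> path_E j j'} \<le> (if 0 < j then 1 else 0) + (if j + 1 < t then 1 else 0)"
      by (rule path_nb)
    also have "\<dots> \<le> 2" by simp
    finally show "card {j'. j' < t \<and> path_E j j'} \<le> 2" .
  qed
  show ?thesis
  proof (intro conjI allI impI)
    fix t :: nat assume t3: "3 \<le> t"
    let ?F = "cycle_E t"
    let ?g = "gamma_off ({0..<n} \<times> {0..<t}) (cprod_E complete_E ?F) k"
    have nb: "\<forall>j<t. card {j'. j' < t \<and> ?F j j'} \<le> 2" using cycle_nb by blast
    have A0: "global_offensive_alliance ({0..<n} \<times> {0..<t}) (cprod_E complete_E ?F) k ({0..<m} \<times> {0..<t})"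
      using upper_gen[OF irrC nb mn m0 _ mk] t3 by simp
    have gp: "(\<exists>S. global_offensive_alliance ({0..<n} \<times> {0..<t}) (cprod_E complete_E ?F) k S \<and> card S = ?g)
       \<and> (\<forall>S. global_offensive_alliance ({0..<n} \<times> {0..<t}) (cprod_E complete_E ?F) k S \<longrightarrow> ?g \<le> card S)"
      by (rule gamma_props[OF _ A0]) simp
    then obtain S where
      S: "global_offensive_alliance ({0..<n} \<times> {0..<t}) (cprod_E complete_E ?F) k S"
      "card S = ?g" by blast
    have le: "?g \<le> card ({0..<m} \<times> {0..<t})" using gp A0 by blast
    have "2 * int (card S) \<ge> (\<Sum>j<t. int n - 1 + k - 2)"
      by (rule lower_gen[OF irrC kn _ S(1)]) (use nb in auto)
    hence low: "2 * int ?g \<ge> int t * (int n + k - 3)" using S(2) by (simp add: algebra_simps)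
    have "real t * real_of_int (int n + k - 3) / 2 \<le> real_of_int (int ?g)"
    proof -
      have "real_of_int (int t * (int n + k - 3)) \<le> real_of_int (2 * int ?g)"
        using low by linarith
      thus ?thesis by simp
    qed
    thus "\<lceil>real t * real_of_int (int n + k - 3) / 2\<rceil>
              \<le> int (gamma_off (cprod_V (complete_V n) (cycle_V t)) (cprod_E complete_E (cycle_E t)) k)"
      unfolding VV by (simp add: ceiling_le_iff)
    have "int ?g \<le> int (m * t)" using le by (simp only: card_cartesian_product card_atLeastLessThan diff_zero of_nat_le_iff)
    also have "int (m * t) = int t * M" using mM by (simp add: mult.commute)
    finally have "int ?g \<le> int t * M" .
    thus "int (gamma_off (cprod_V (complete_V n) (cycle_V t)) (cprod_E complete_E (cycle_E t)) k)
              \<le> int t * \<lceil>real_of_int (int n + k + 1) / 2\<rceil>"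
      unfolding VV M_def .
  next
    fix t :: nat assume t1: "1 \<le> t"
    then obtain s where ts: "t = Suc s" by (cases t) auto
    let ?F = "path_E"
    let ?g = "gamma_off ({0..<n} \<times> {0..<t}) (cprod_E complete_E ?F) k"
    have A0: "global_offensive_alliance ({0..<n} \<times> {0..<t}) (cprod_E complete_E ?F) k ({0..<m} \<times> {0..<t})"
      using upper_gen[OF irrP pnb2 mn m0 _ mk] t1 by simp
    have gp: "(\<exists>S. global_offensive_alliance ({0..<n} \<times> {0..<t}) (cprod_E complete_E ?F) k S \<and> card S = ?g)
       \<and> (\<forall>S. global_offensive_alliance ({0..<n} \<times> {0..<t}) (cprod_E complete_E ?F) k S \<longrightarrow> ?g \<le> card S)"
      by (rule gamma_props[OF _ A0]) simp
    then obtain S where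
      S: "global_offensive_alliance ({0..<n} \<times> {0..<t}) (cprod_E complete_E ?F) k S"
      "card S = ?g" by blast
    have le: "?g \<le> card ({0..<m} \<times> {0..<t})" using gp A0 by blast
    let ?b = "\<lambda>j. ((if 0 < j then 1 else 0) + (if j + 1 < t then 1 else 0) :: int)"
    have bnd: "\<forall>j<t. int (card {j'. j' < t \<and> path_E j j'}) \<le> ?b j"
    proof (intro allI impI)
      fix j assume "j < t"
      have "card {j'. j' < t \<and> path_E j j'} \<le> (if 0 < j then 1 else 0) + (if j + 1 < t then 1 else 0)"
        by (rule path_nb)
      thus "int (card {j'. j' < t \<and> path_E j j'}) \<le> ?b j" by (simp split: if_splits)
    qed
    have "2 * int (card S) \<ge> (\<Sum>j<t. int n - 1 + k - ?b j)"
      by (rule lower_gen[OF irrP kn bnd S(1)])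
    also have "(\<Sum>j<t. int n - 1 + k - ?b j) = int t * (int n - 1 + k) - (\<Sum>j<t. ?b j)"
      by (simp add: sum_subtractf)
    also have "(\<Sum>j<t. ?b j) = 2 * int s" unfolding ts by (rule path_sum)
    finally have low: "2 * int ?g \<ge> int t * (int n + k - 3) + 2" using S(2) ts by (simp add: algebra_simps)
    have "(real t * real_of_int (int n + k - 3) + 2) / 2 \<le> real_of_int (int ?g)"
    proof -
      have "real_of_int (int t * (int n + k - 3) + 2) \<le> real_of_int (2 * int ?g)"
        using low by linarith
      thus ?thesis by simp
    qed
    thus "\<lceil>(real t * real_of_int (int n + k - 3) + 2) / 2\<rceil>
              \<le> int (gamma_off (cprod_V (complete_V n) (path_V t)) (cprod_E complete_E path_E) k)"
      unfolding VV by (simp add: ceiling_le_iff)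
    have "int ?g \<le> int (m * t)" using le by (simp only: card_cartesian_product card_atLeastLessThan diff_zero of_nat_le_iff)
    also have "int (m * t) = int t * M" using mM by (simp add: mult.commute)
    finally have "int ?g \<le> int t * M" .
    thus "int (gamma_off (cprod_V (complete_V n) (path_V t)) (cprod_E complete_E path_E) k)
              \<le> int t * \<lceil>real_of_int (int n + k + 1) / 2\<rceil>"
      unfolding VV M_def .
  qed
qed

end
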